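(* Let $\mathcal{H}=\{P_3,K_3\}$ and let $k\geq 3$ be an integer. Then \[\mathcal{E}_\mathcal{H}(k)=\begin{cases}\binom{k+1}{2}-\frac{k+2}{2} & k\text{ even},\\ \binom{k+1}{2}-\frac{k+1}{2} & k\text{ odd}.\end{cases}\] Moreover, the only simple graph $G$ with $\operatorname{ex}(G,\mathcal{H})<k$ attaining this number of edges is $G_k$, where for $k$ odd $G_k=K_{k+1}\setminus\frac{k+1}{2}K_2$ (the complete graph on $k+1$ vertices minus a perfect matching), and for $k$ even $G_k=K_{k+1}\setminus(\frac{k-2}{2}K_2\cup P_2)$ (the complete graph on $k+1$ vertices minus a vertex-disjoint union of $\frac{k-2}{2}$ edges and one path with 2 edges, covering all $k+1$ vertices).
   Context: $P_t$ denotes the path with $t$ edges; $sK_2$ denotes a matching of $s$ edges. Graphs are simple, 2-uniform, without isolated vertices. $\operatorname{ex}(G,\mathcal{H})$ is the maximum number of edges in a subgraph of $G$ containing no member of $\mathcal{H}$, and $\mathcal{E}_\mathcal{H}(k):=\sup\{e(G): G\text{ simple}, \operatorname{ex}(G,\mathcal{H})<k\}$. *)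

theory Defs
  imports Main "HOL-Library.Extended_Nat"
begin

text \<open>A simple graph without isolated vertices is represented by its (finite) edge set;
  each edge is a 2-element set of vertices. Vertices are natural numbers
  (every finite graph is isomorphic to one on nat).\<close>

definition simple_graph :: "nat set set \<Rightarrow> bool" where
  "simple_graph E \<longleftrightarrow> finite E \<and> (\<forall>e\<in>E. card e = 2)"

definition has_P3 :: "nat set set \<Rightarrow> bool" where
  "has_P3 F \<longleftrightarrow> (\<exists>a b c d. distinct [a,b,c,d] \<and> {a,b} \<in> F \<and> {b,c} \<in> F \<and> {c,d} \<in> F)"

definition has_K3 :: "nat set set \<Rightarrow> bool" where
  "has_K3 F \<longleftrightarrow> (\<exists>a b c. distinct [a,b,c] \<and> {a,b} \<in> F \<and> {b,c} \<in> F \<and> {a,c} \<in> F)"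

definition H_free :: "nat set set \<Rightarrow> bool" where
  "H_free F \<longleftrightarrow> \<not> has_P3 F \<and> \<not> has_K3 F"

definition ex_H :: "nat set set \<Rightarrow> nat" where
  "ex_H G = Max {card F | F. F \<subseteq> G \<and> H_free F}"

definition E_H :: "nat \<Rightarrow> enat" where
  "E_H k = Sup {enat (card G) | G. simple_graph G \<and> ex_H G < k}"

definition graph_iso :: "nat set set \<Rightarrow> nat set set \<Rightarrow> bool" where
  "graph_iso G H \<longleftrightarrow> (\<exists>f. bij_betw f (\<Union>G) (\<Union>H) \<and> (\<lambda>e. f ` e) ` G = H)"

definition removed_edges :: "nat \<Rightarrow> nat set set" where
  "removed_edges k =
     (if odd k then {{2*i, 2*i+1} | i. i < (k+1) div 2}
      else {{2*i, 2*i+1} | i. i < (k-2) div 2} \<union> {{k-2, k-1}, {k-1, k}})"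

definition G_k :: "nat \<Rightarrow> nat set set" where
  "G_k k = {{u,v} | u v. u \<le> k \<and> v \<le> k \<and> u \<noteq> v} - removed_edges k"

end

theory Submission
  imports Defs
begin

definition nbr :: "nat set set \<Rightarrow> nat \<Rightarrow> nat set" where
  "nbr G x = {y. {x,y} \<in> G}"

definition star_sys :: "nat set set \<Rightarrow> nat set \<Rightarrow> (nat \<Rightarrow> nat) \<Rightarrow> bool" where
  "star_sys G X p \<longleftrightarrow> finite X \<and> (\<forall>x\<in>X. {x, p x} \<in> G) \<and> (\<forall>x\<in>X. p x \<notin> X)"

lemma sg_edge: "simple_graph G \<Longrightarrow> e \<in> G \<Longrightarrow> \<exists>a b. a \<noteq> b \<and> e = {a,b}"
  unfolding simple_graph_def by (meson card_2_iff)

lemma sg_noloop: "simple_graph G \<Longrightarrow> {x,y} \<in> G \<Longrightarrow> x \<noteq> y"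
  unfolding simple_graph_def by fastforce

lemma sg_finite: "simple_graph G \<Longrightarrow> finite G"
  unfolding simple_graph_def by auto

lemma sg_finite_V: "simple_graph G \<Longrightarrow> finite (\<Union>G)"
  unfolding simple_graph_def by (metis card_eq_0_iff finite_Union zero_neq_numeral)

lemma sg_sub: "simple_graph G \<Longrightarrow> H \<subseteq> G \<Longrightarrow> simple_graph H"
  unfolding simple_graph_def by (auto intro: finite_subset)

lemma nbr_sub_V: "nbr G x \<subseteq> \<Union>G"
  unfolding nbr_def by auto

lemma nbr_finite: "simple_graph G \<Longrightarrow> finite (nbr G x)"
  using sg_finite_V nbr_sub_V finite_subset by metis

lemma nbr_sym: "y \<in> nbr G x \<longleftrightarrow> x \<in> nbr G y"
  unfolding nbr_def by (simp add: insert_commute)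

lemma nbr_noloop: "simple_graph G \<Longrightarrow> x \<notin> nbr G x"
  unfolding nbr_def using sg_noloop by blast

lemma star_H_free:
  assumes "star_sys G X p"
  shows "H_free ((\<lambda>x. {x, p x}) ` X)"
proof -
  let ?F = "(\<lambda>x. {x, p x}) ` X"
  have nX: "\<And>x. x \<in> X \<Longrightarrow> p x \<notin> X" using assms unfolding star_sys_def by auto
  have key: "\<And>a b. {a,b} \<in> ?F \<Longrightarrow> (a \<in> X \<and> b = p a) \<or> (b \<in> X \<and> a = p b)"
  proof -
    fix a b assume "{a,b} \<in> ?F"
    then obtain x where x: "x \<in> X" "{a,b} = {x, p x}" by auto
    then show "(a \<in> X \<and> b = p a) \<or> (b \<in> X \<and> a = p b)"
      by (metis doubleton_eq_iff)
  qed
  have np3: "\<not> has_P3 ?F"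
  proof
    assume "has_P3 ?F"
    then obtain a b c d where d: "distinct [a,b,c,d]" "{a,b} \<in> ?F" "{b,c} \<in> ?F" "{c,d} \<in> ?F"
      unfolding has_P3_def by blast
    from key[OF d(2)] key[OF d(3)] key[OF d(4)] d(1) nX show False by auto
  qed
  have nk3: "\<not> has_K3 ?F"
  proof
    assume "has_K3 ?F"
    then obtain a b c where d: "distinct [a,b,c]" "{a,b} \<in> ?F" "{b,c} \<in> ?F" "{a,c} \<in> ?F"
      unfolding has_K3_def by blast
    from key[OF d(2)] key[OF d(3)] key[OF d(4)] d(1) nX show False by auto
  qed
  show ?thesis unfolding H_free_def using np3 nk3 by auto
qed

lemma star_card:
  assumes "star_sys G X p"
  shows "card ((\<lambda>x. {x, p x}) ` X) = card X"
proof -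
  have nX: "\<And>x. x \<in> X \<Longrightarrow> p x \<notin> X" using assms unfolding star_sys_def by auto
  have "inj_on (\<lambda>x. {x, p x}) X"
    unfolding inj_on_def by (metis doubleton_eq_iff nX)
  then show ?thesis by (simp add: card_image)
qed

lemma ex_H_set_finite: "finite G \<Longrightarrow> finite {card F | F. F \<subseteq> G \<and> H_free F}"
proof -
  assume "finite G"
  have "{card F | F. F \<subseteq> G \<and> H_free F} \<subseteq> card ` Pow G" by auto
  then show ?thesis using \<open>finite G\<close> finite_subset by blast
qed

lemma H_free_empty: "H_free {}"
  unfolding H_free_def has_P3_def has_K3_def by auto

lemma ex_H_ge: "finite G \<Longrightarrow> F \<subseteq> G \<Longrightarrow> H_free F \<Longrightarrow> card F \<le> ex_H G"
  unfolding ex_H_def by (rule Max_ge) (auto simp: ex_H_set_finite)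

lemma ex_H_attained: "finite G \<Longrightarrow> \<exists>F. F \<subseteq> G \<and> H_free F \<and> card F = ex_H G"
proof -
  assume f: "finite G"
  have "ex_H G \<in> {card F | F. F \<subseteq> G \<and> H_free F}"
    unfolding ex_H_def by (rule Max_in) (use f ex_H_set_finite H_free_empty in auto)
  then show ?thesis by auto
qed

lemma star_ex_H:
  assumes "finite G" "star_sys G X p"
  shows "card X \<le> ex_H G"
proof -
  have "(\<lambda>x. {x, p x}) ` X \<subseteq> G" using assms(2) unfolding star_sys_def by auto
  from ex_H_ge[OF assms(1) this star_H_free[OF assms(2)]] star_card[OF assms(2)]
  show ?thesis by simp
qed

lemma REP:
  assumes sg: "simple_graph G" and FG: "F \<subseteq> G" and hf: "H_free F"
  shows "\<exists>X p. star_sys G X p \<and> card X = card F"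
proof -
  define L where "L = {x. \<exists>y. {x,y} \<in> F \<and> (\<forall>z. {x,z} \<in> F \<longrightarrow> z = y)}"
  define q where "q x = (THE y. {x,y} \<in> F)" for x
  define X where "X = {x \<in> L. q x \<notin> L \<or> x < q x}"
  have sgF: "simple_graph F" using sg FG sg_sub by blast
  have qL: "{x, q x} \<in> F \<and> (\<forall>z. {x,z} \<in> F \<longrightarrow> z = q x)" if "x \<in> L" for x
  proof -
    from that obtain y where y: "{x,y} \<in> F" "\<forall>z. {x,z} \<in> F \<longrightarrow> z = y" unfolding L_def by auto
    have "q x = y" unfolding q_def using y by (intro the_equality[where P="\<lambda>y. {x,y} \<in> F"]) blast+
    with y show ?thesis by blast
  qed
  have oneL: "a \<in> L \<or> b \<in> L" if ab: "{a,b} \<in> F" for a b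
  proof (rule ccontr)
    assume "\<not> (a \<in> L \<or> b \<in> L)"
    then have "\<not> (\<forall>z. {a,z} \<in> F \<longrightarrow> z = b)" "\<not> (\<forall>z. {b,z} \<in> F \<longrightarrow> z = a)"
      using ab unfolding L_def by (auto simp: insert_commute)
    then obtain a' b' where a': "{a,a'} \<in> F" "a' \<noteq> b" and b': "{b,b'} \<in> F" "b' \<noteq> a" by blast
    have "a \<noteq> b" "a \<noteq> a'" "b \<noteq> b'" using sg_noloop[OF sgF] ab a' b' by auto
    show False
    proof (cases "a' = b'")
      case True
      have e2: "{b,a'} \<in> F" using b' True by simp
      have dd: "distinct [a,b,a']" using a' \<open>a \<noteq> b\<close> \<open>a \<noteq> a'\<close> by auto
      have "has_K3 F" unfolding has_K3_def using dd ab e2 a'(1) by blast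
      then show False using hf unfolding H_free_def by auto
    next
      case False
      have e1: "{a',a} \<in> F" using a' by (simp add: insert_commute)
      have dd: "distinct [a',a,b,b']" using a' b' False \<open>a \<noteq> b\<close> \<open>a \<noteq> a'\<close> \<open>b \<noteq> b'\<close> by auto
      have "has_P3 F" unfolding has_P3_def using dd ab e1 b'(1) by blast
      then show False using hf unfolding H_free_def by auto
    qed
  qed
  have qq: "q (q x) = x" if "x \<in> L" "q x \<in> L" for x
    using qL[OF that(1)] qL[OF that(2)] by (metis insert_commute)
  have nX: "q x \<notin> X" if "x \<in> X" for x
  proof
    assume "q x \<in> X"
    with that have "x \<in> L" "q x \<in> L" "q x \<notin> L \<or> x < q x" "q (q x) \<notin> L \<or> q x < q (q x)"
      unfolding X_def by auto
    then show False using qq by auto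
  qed
  have Fimg: "F = (\<lambda>x. {x, q x}) ` X"
  proof
    show "(\<lambda>x. {x, q x}) ` X \<subseteq> F" using qL unfolding X_def by blast
  next
    show "F \<subseteq> (\<lambda>x. {x, q x}) ` X"
    proof
      fix e assume e: "e \<in> F"
      then obtain a b where ab: "a \<noteq> b" "e = {a,b}" using sg_edge[OF sgF] by blast
      have ea: "{a,b} \<in> F" "{b,a} \<in> F" using e ab by (auto simp: insert_commute)
      show "e \<in> (\<lambda>x. {x, q x}) ` X"
      proof (cases "a \<in> L")
        case aL: True
        then have qa: "q a = b" using qL ea by blast
        show ?thesis
        proof (cases "b \<in> L")
          case bL: True
          then have qb: "q b = a" using qL ea by blast
          show ?thesis
          proof (cases "a < b")
            case True
            then have "a \<in> X" unfolding X_def using aL qa by auto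
            then show ?thesis using ab qa by auto
          next
            case False
            then have "b \<in> X" unfolding X_def using bL qb ab by auto
            then show ?thesis using ab qb by (auto simp: insert_commute)
          qed
        next
          case False
          then have "a \<in> X" unfolding X_def using aL qa by auto
          then show ?thesis using ab qa by auto
        qed
      next
        case False
        then have bL: "b \<in> L" using oneL ea by auto
        then have qb: "q b = a" using qL ea by blast
        then have "b \<in> X" unfolding X_def using bL False by auto
        then show ?thesis using ab qb by (auto simp: insert_commute)
      qed
    qed
  qed
  have XV: "X \<subseteq> \<Union>G" using qL FG unfolding X_def by blast
  have fX: "finite X" using XV sg_finite_V[OF sg] finite_subset by blast
  have eX: "\<forall>x\<in>X. {x, q x} \<in> G" using qL FG unfolding X_def by blast
  have ss: "star_sys G X q"
    unfolding star_sys_def using fX eX nX by blast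
  have "card X = card F" using star_card[OF ss] Fimg by simp
  with ss show ?thesis by blast
qed

lemma EXH:
  assumes sg: "simple_graph G"
  shows "\<exists>X p. star_sys G X p \<and> card X = ex_H G"
proof -
  obtain F where "F \<subseteq> G" "H_free F" "card F = ex_H G"
    using ex_H_attained sg_finite[OF sg] by blast
  then show ?thesis using REP[OF sg] by metis
qed

lemma star_le:
  assumes sg: "simple_graph G" and "star_sys G X p"
  shows "card X \<le> ex_H G"
  using star_ex_H sg_finite[OF sg] assms(2) by blast

lemma card_nbr_edges:
  assumes sg: "simple_graph G"
  shows "card (nbr G x) = card {e\<in>G. x \<in> e}"
proof -
  have "bij_betw (\<lambda>y. {x,y}) (nbr G x) {e\<in>G. x \<in> e}"
  proof (rule bij_betwI')
    show "\<And>y z. y \<in> nbr G x \<Longrightarrow> z \<in> nbr G x \<Longrightarrow> ({x, y} = {x, z}) = (y = z)"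
      by (metis doubleton_eq_iff)
    show "\<And>y. y \<in> nbr G x \<Longrightarrow> {x, y} \<in> {e \<in> G. x \<in> e}" unfolding nbr_def by auto
    show "\<exists>y\<in>nbr G x. e = {x, y}" if "e \<in> {e \<in> G. x \<in> e}" for e
    proof -
      from that have e: "e \<in> G" "x \<in> e" by auto
      then obtain a b where "a \<noteq> b" "e = {a,b}" using sg_edge[OF sg] by blast
      then show ?thesis using e unfolding nbr_def by (auto simp: insert_commute)
    qed
  qed
  then show ?thesis by (rule bij_betw_same_card)
qed

lemma DC:
  assumes "finite A" "finite E"
  shows "(\<Sum>u\<in>A. card {e\<in>E. u \<in> e}) = (\<Sum>e\<in>E. card (e \<inter> A))"
proof -
  have 1: "card {e\<in>E. u \<in> e} = (\<Sum>e\<in>E. if u \<in> e then 1 else 0)" for u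
    using sum.inter_filter[OF assms(2), of "\<lambda>_. 1::nat" "\<lambda>e. u \<in> e"] by simp
  have 2: "card (e \<inter> A) = (\<Sum>u\<in>A. if u \<in> e then 1 else 0)" for e
  proof -
    have "e \<inter> A = {u\<in>A. u \<in> e}" by auto
    then show ?thesis using sum.inter_filter[OF assms(1), of "\<lambda>_. 1::nat" "\<lambda>u. u \<in> e"] by simp
  qed
  show ?thesis unfolding 1 2 by (rule sum.swap)
qed

lemma handshake:
  assumes sg: "simple_graph G" and A: "finite A" "\<Union>G \<subseteq> A"
  shows "(\<Sum>x\<in>A. card (nbr G x)) = 2 * card G"
proof -
  have "(\<Sum>x\<in>A. card (nbr G x)) = (\<Sum>x\<in>A. card {e\<in>G. x \<in> e})"
    using card_nbr_edges[OF sg] by simp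
  also have "\<dots> = (\<Sum>e\<in>G. card (e \<inter> A))" using DC[OF A(1) sg_finite[OF sg]] .
  also have "\<dots> = (\<Sum>e\<in>G. 2)"
  proof (rule sum.cong)
    fix e assume "e \<in> G"
    then have "e \<inter> A = e" "card e = 2" using A(2) sg unfolding simple_graph_def by auto
    then show "card (e \<inter> A) = 2" by simp
  qed simp
  finally show ?thesis by simp
qed

lemma swap_nbr:
  assumes "finite N" "finite W"
  shows "(\<Sum>w\<in>W. card (nbr G w \<inter> N)) = (\<Sum>u\<in>N. card (nbr G u \<inter> W))"
proof -
  have 1: "card (nbr G w \<inter> N) = (\<Sum>u\<in>N. if {w,u} \<in> G then 1 else 0)" for w
  proof -
    have "nbr G w \<inter> N = {u\<in>N. {w,u} \<in> G}" unfolding nbr_def by auto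
    then show ?thesis using sum.inter_filter[OF assms(1), of "\<lambda>_. 1::nat" "\<lambda>u. {w,u} \<in> G"] by simp
  qed
  have 2: "card (nbr G u \<inter> W) = (\<Sum>w\<in>W. if {w,u} \<in> G then 1 else 0)" for u
  proof -
    have "nbr G u \<inter> W = {w\<in>W. {w,u} \<in> G}" unfolding nbr_def by (auto simp: insert_commute)
    then show ?thesis using sum.inter_filter[OF assms(2), of "\<lambda>_. 1::nat" "\<lambda>w. {w,u} \<in> G"] by simp
  qed
  show ?thesis unfolding 1 2 by (rule sum.swap)
qed

lemma decomp:
  fixes v :: nat
  assumes sg: "simple_graph G"
  defines "N \<equiv> nbr G v"
  defines "W \<equiv> \<Union>G - insert v N"
  defines "GW \<equiv> {e\<in>G. e \<subseteq> W}"
  shows "2 * card G = card N + (\<Sum>u\<in>N. card (nbr G u)) + (\<Sum>u\<in>N. card (nbr G u \<inter> W)) + 2 * card GW"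
proof -
  have fV: "finite (\<Union>G)" using sg_finite_V[OF sg] .
  have NV: "N \<subseteq> \<Union>G" unfolding N_def using nbr_sub_V .
  have fN: "finite N" using NV fV finite_subset by blast
  have fW: "finite W" unfolding W_def using fV by simp
  have vN: "v \<notin> N" unfolding N_def using nbr_noloop[OF sg] .
  have vW: "v \<notin> W" unfolding W_def by simp
  have NW: "N \<inter> W = {}" unfolding W_def by auto
  have A: "insert v (\<Union>G) = insert v (N \<union> W)" using NV unfolding W_def by auto
  have E0: "2 * card G = (\<Sum>x\<in>insert v (\<Union>G). card (nbr G x))"
    using handshake[OF sg _ subset_insertI[of "\<Union>G" v]] fV by simp
  also have "\<dots> = card N + ((\<Sum>u\<in>N. card (nbr G u)) + (\<Sum>w\<in>W. card (nbr G w)))"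
  proof -
    have "(\<Sum>x\<in>insert v (N \<union> W). card (nbr G x)) = card (nbr G v) + (\<Sum>x\<in>N \<union> W. card (nbr G x))"
      by (rule sum.insert) (use vN vW fN fW in auto)
    also have "(\<Sum>x\<in>N \<union> W. card (nbr G x)) = (\<Sum>u\<in>N. card (nbr G u)) + (\<Sum>w\<in>W. card (nbr G w))"
      by (rule sum.union_disjoint) (use NW fN fW in auto)
    finally show ?thesis unfolding A N_def by simp
  qed
  finally have E1: "2 * card G = card N + ((\<Sum>u\<in>N. card (nbr G u)) + (\<Sum>w\<in>W. card (nbr G w)))" .
  have E2: "(\<Sum>w\<in>W. card (nbr G w)) = (\<Sum>w\<in>W. card (nbr G w \<inter> N) + card (nbr GW w))"
  proof (rule sum.cong)
    fix w assume wW: "w \<in> W"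
    have wN: "w \<notin> N" using wW NW by auto
    have s1: "nbr GW w = nbr G w \<inter> W" unfolding GW_def nbr_def using wW by auto
    have s2: "nbr G w \<subseteq> N \<union> W"
    proof
      fix y assume y: "y \<in> nbr G w"
      have "y \<noteq> v" using y wN nbr_sym unfolding N_def by metis
      moreover have "y \<in> \<Union>G" using y nbr_sub_V by blast
      ultimately show "y \<in> N \<union> W" unfolding W_def by auto
    qed
    have eq: "nbr G w = (nbr G w \<inter> N) \<union> (nbr G w \<inter> W)" using s2 by auto
    have "card (nbr G w) = card ((nbr G w \<inter> N) \<union> (nbr G w \<inter> W))"
      using eq by (rule arg_cong[where f=card])
    also have "\<dots> = card (nbr G w \<inter> N) + card (nbr G w \<inter> W)"
      by (rule card_Un_disjoint) (use NW fN fW in auto)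
    finally have "card (nbr G w) = card (nbr G w \<inter> N) + card (nbr G w \<inter> W)" .
    then show "card (nbr G w) = card (nbr G w \<inter> N) + card (nbr GW w)" using s1 by simp
  qed simp
  have E3: "(\<Sum>w\<in>W. card (nbr G w \<inter> N) + card (nbr GW w)) = (\<Sum>w\<in>W. card (nbr G w \<inter> N)) + (\<Sum>w\<in>W. card (nbr GW w))"
    by (rule sum.distrib)
  have E4: "(\<Sum>w\<in>W. card (nbr GW w)) = 2 * card GW"
  proof (rule handshake)
    show "simple_graph GW" unfolding GW_def by (rule sg_sub[OF sg]) auto
  qed (use fW GW_def in auto)
  have E5: "(\<Sum>w\<in>W. card (nbr G w \<inter> N)) = (\<Sum>u\<in>N. card (nbr G u \<inter> W))"
    using swap_nbr[OF fN fW] .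
  show ?thesis using E1 E2 E3 E4 E5 by linarith
qed

lemma deg_le:
  assumes sg: "simple_graph G"
  shows "card (nbr G u) \<le> ex_H G"
proof -
  have "star_sys G (nbr G u) (\<lambda>_. u)"
  proof -
    have "\<forall>x\<in>nbr G u. {x, u} \<in> G" unfolding nbr_def by (simp add: insert_commute)
    then show ?thesis unfolding star_sys_def using nbr_finite[OF sg] nbr_noloop[OF sg] by blast
  qed
  then show ?thesis using star_le[OF sg] by blast
qed

lemma lem1:
  fixes v :: nat
  assumes sg: "simple_graph G"
  defines "N \<equiv> nbr G v"
  defines "W \<equiv> \<Union>G - insert v N"
  defines "GW \<equiv> {e\<in>G. e \<subseteq> W}"
  shows "ex_H GW + card N \<le> ex_H G"
proof -
  have sgW: "simple_graph GW" unfolding GW_def by (rule sg_sub[OF sg]) auto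
  obtain XW pW where ss: "star_sys GW XW pW" "card XW = ex_H GW" using EXH[OF sgW] by blast
  have XW: "XW \<subseteq> W" "\<And>x. x \<in> XW \<Longrightarrow> pW x \<in> W" "\<And>x. x \<in> XW \<Longrightarrow> {x, pW x} \<in> G"
      "\<And>x. x \<in> XW \<Longrightarrow> pW x \<notin> XW" "finite XW"
    using ss(1) unfolding star_sys_def GW_def by auto
  have fN: "finite N" unfolding N_def using nbr_finite[OF sg] .
  have vN: "v \<notin> N" unfolding N_def using nbr_noloop[OF sg] .
  have NW: "N \<inter> W = {}" unfolding W_def by auto
  have vW: "v \<notin> W" unfolding W_def by auto
  define p where "p x = (if x \<in> N then v else pW x)" for x
  have "star_sys G (XW \<union> N) p"
    unfolding star_sys_def
  proof (intro conjI ballI)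
    show "finite (XW \<union> N)" using XW(5) fN by simp
  next
    fix x assume x: "x \<in> XW \<union> N"
    show "{x, p x} \<in> G"
    proof (cases "x \<in> N")
      case True then show ?thesis unfolding p_def N_def nbr_def by (simp add: insert_commute)
    next
      case False then show ?thesis unfolding p_def using x XW(3) by auto
    qed
    show "p x \<notin> XW \<union> N"
    proof (cases "x \<in> N")
      case True then show ?thesis unfolding p_def using vN vW XW(1) by auto
    next
      case False then have "x \<in> XW" using x by auto
      then show ?thesis unfolding p_def using False XW(2,4) NW by auto
    qed
  qed
  then have "card (XW \<union> N) \<le> ex_H G" using star_le[OF sg] by blast
  moreover have "card (XW \<union> N) = card XW + card N"
    by (rule card_Un_disjoint) (use XW(1,5) fN NW in auto)
  ultimately show ?thesis using ss(2) by simp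
qed

lemma lem3:
  fixes v :: nat
  assumes sg: "simple_graph G"
  defines "N \<equiv> nbr G v"
  defines "W \<equiv> \<Union>G - insert v N"
  assumes uN: "u \<in> N"
  shows "card (nbr G u \<inter> W) + card N \<le> ex_H G + 1"
proof -
  have fN: "finite N" unfolding N_def using nbr_finite[OF sg] .
  have vN: "v \<notin> N" unfolding N_def using nbr_noloop[OF sg] .
  have NW: "N \<inter> W = {}" unfolding W_def by auto
  have vW: "v \<notin> W" unfolding W_def by auto
  have uW: "u \<notin> W" using uN NW by auto
  define p where "p x = (if x \<in> N then v else u)" for x
  define X where "X = (N - {u}) \<union> (nbr G u \<inter> W)"
  have "star_sys G X p"
    unfolding star_sys_def
  proof (intro conjI ballI)
    show "finite X" unfolding X_def using fN nbr_finite[OF sg] by simp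
  next
    fix x assume x: "x \<in> X"
    show "{x, p x} \<in> G"
    proof (cases "x \<in> N")
      case True then show ?thesis unfolding p_def N_def nbr_def by (simp add: insert_commute)
    next
      case False then have "x \<in> nbr G u" using x unfolding X_def by auto
      then show ?thesis unfolding p_def using False by (simp add: nbr_def insert_commute)
    qed
    show "p x \<notin> X"
      unfolding p_def X_def using vN vW uW by auto
  qed
  then have "card X \<le> ex_H G" using star_le[OF sg] by blast
  moreover have "card X = card (N - {u}) + card (nbr G u \<inter> W)"
    unfolding X_def by (rule card_Un_disjoint) (use fN nbr_finite[OF sg] NW in auto)
  moreover have "card (N - {u}) + 1 = card N" using uN fN
    by (metis One_nat_def Suc_pred card_Diff_singleton card_gt_0_iff empty_iff add.commute plus_1_eq_Suc)
  ultimately show ?thesis by linarith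
qed

lemma arith1:
  fixes d m mW :: nat
  assumes "mW + d \<le> m"
  shows "d + d*m + d*(m+1-d) + mW*(mW+2) \<le> m*(m+2)"
proof -
  obtain t where t: "m = d + t" using assms le_add1 le_Suc_ex by (metis add.commute le_trans)
  have mt: "mW \<le> t" using assms t by simp
  have "mW*(mW+2) \<le> t*(t+2)" using mt by (intro mult_le_mono) auto
  moreover have "m+1-d = t+1" using t by simp
  ultimately show ?thesis unfolding t by (simp add: algebra_simps)
qed

lemma arith2:
  fixes d m mW :: nat
  assumes "mW + d \<le> m"
  shows "d + d*d + d*(m+1-d) + mW*(mW+2) + d*(m-d) \<le> m*(m+2)"
proof -
  obtain t where t: "m = d + t" using assms le_add1 le_Suc_ex by (metis add.commute le_trans)
  have mt: "mW \<le> t" using assms t by simp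
  have "mW*(mW+2) \<le> t*(t+2)" using mt by (intro mult_le_mono) auto
  moreover have "m+1-d = t+1" "m - d = t" using t by simp_all
  ultimately show ?thesis unfolding t by (simp add: algebra_simps)
qed

theorem vizing:
  assumes "simple_graph G"
  shows "2 * card G \<le> ex_H G * (ex_H G + 2)"
  using assms
proof (induction "card G" arbitrary: G rule: less_induct)
  case less
  note sg = less.prems
  show ?case
  proof (cases "G = {}")
    case True then show ?thesis by simp
  next
    case False
    then obtain e where e: "e \<in> G" by blast
    then obtain v y where vy: "v \<noteq> y" "e = {v,y}" using sg_edge[OF sg] by blast
    define N where "N = nbr G v"
    define W where "W = \<Union>G - insert v N"
    define GW where "GW = {e\<in>G. e \<subseteq> W}"
    define m where "m = ex_H G"
    define d where "d = card N"
    have sgW: "simple_graph GW" unfolding GW_def by (rule sg_sub[OF sg]) auto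
    have vW: "v \<notin> W" unfolding W_def by auto
    have "e \<notin> GW" unfolding GW_def using vy vW by auto
    then have "GW \<subset> G" unfolding GW_def using e by auto
    then have "card GW < card G" using sg_finite[OF sg] psubset_card_mono by blast
    then have IH: "2 * card GW \<le> ex_H GW * (ex_H GW + 2)" using less.hyps sgW by blast
    have L1: "ex_H GW + d \<le> m" unfolding m_def d_def GW_def W_def N_def using lem1[OF sg] .
    have S1: "(\<Sum>u\<in>N. card (nbr G u)) \<le> d * m"
      unfolding d_def m_def using sum_bounded_above[of N "\<lambda>u. card (nbr G u)" "ex_H G"] deg_le[OF sg] by simp
    have S2: "(\<Sum>u\<in>N. card (nbr G u \<inter> W)) \<le> d * (m + 1 - d)"
    proof -
      have "card (nbr G u \<inter> W) + d \<le> m + 1" if "u \<in> N" for u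
        using lem3[OF sg, of u v] that unfolding N_def W_def m_def d_def by blast
      then have "\<And>u. u \<in> N \<Longrightarrow> card (nbr G u \<inter> W) \<le> m + 1 - d" by fastforce
      from sum_bounded_above[of N "\<lambda>u. card (nbr G u \<inter> W)" "m + 1 - d", OF this]
      show ?thesis unfolding d_def by simp
    qed
    have D: "2 * card G = d + (\<Sum>u\<in>N. card (nbr G u)) + (\<Sum>u\<in>N. card (nbr G u \<inter> W)) + 2 * card GW"
      unfolding d_def N_def W_def GW_def using decomp[OF sg] .
    have "2 * card G \<le> d + d*m + d*(m+1-d) + ex_H GW * (ex_H GW + 2)"
      using D S1 S2 IH by linarith
    also have "\<dots> \<le> m * (m+2)" using arith1[OF L1] .
    finally show ?thesis unfolding m_def .
  qed
qed

lemma max_deg_vertex: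
  assumes sg: "simple_graph G" and ne: "G \<noteq> {}"
  obtains v where "v \<in> \<Union>G" "\<And>x. x \<in> \<Union>G \<Longrightarrow> card (nbr G x) \<le> card (nbr G v)"
proof -
  let ?V = "\<Union>G"
  have fV: "finite ?V" using sg_finite_V[OF sg] .
  have neV: "?V \<noteq> {}" using ne sg_edge[OF sg] by blast
  have "Max ((\<lambda>x. card (nbr G x)) ` ?V) \<in> (\<lambda>x. card (nbr G x)) ` ?V"
    using fV neV by (intro Max_in) auto
  then obtain v where v: "v \<in> ?V" "card (nbr G v) = Max ((\<lambda>x. card (nbr G x)) ` ?V)"
    by (metis (no_types, lifting) imageE)
  have "\<And>x. x \<in> ?V \<Longrightarrow> card (nbr G x) \<le> card (nbr G v)"
    unfolding v(2) using fV by (intro Max_ge) auto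
  then show ?thesis using that v(1) by blast
qed

lemma nbr_nonempty:
  assumes sg: "simple_graph G" and "v \<in> \<Union>G"
  shows "nbr G v \<noteq> {}"
proof -
  from assms(2) obtain e where e: "e \<in> G" "v \<in> e" by auto
  then obtain a b where "a \<noteq> b" "e = {a,b}" using sg_edge[OF sg] by blast
  then show ?thesis using e unfolding nbr_def by (auto simp: insert_commute)
qed

lemma sum_pair_le:
  fixes s :: "nat \<Rightarrow> nat"
  assumes "finite N" "u1 \<in> N" "u2 \<in> N" "u1 \<noteq> u2"
  shows "s u1 + s u2 \<le> (\<Sum>u\<in>N. s u)"
proof -
  have "(\<Sum>u\<in>{u1,u2}. s u) \<le> (\<Sum>u\<in>N. s u)"
    by (rule sum_mono2) (use assms in auto)
  then show ?thesis using assms(4) by simp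
qed

lemma tight:
  assumes sg: "simple_graph G" and m2: "2 \<le> ex_H G"
    and tt: "ex_H G * (ex_H G + 2) \<le> 2 * card G + 1"
  shows "card (\<Union>G) = ex_H G + 2"
proof -
  define m where "m = ex_H G"
  have "2 * 4 \<le> m * (m + 2)" using m2 unfolding m_def by (intro mult_le_mono) auto
  then have "G \<noteq> {}" using tt unfolding m_def by auto
  then obtain v where vV: "v \<in> \<Union>G" and vmax: "\<And>x. x \<in> \<Union>G \<Longrightarrow> card (nbr G x) \<le> card (nbr G v)"
    using max_deg_vertex[OF sg] by blast
  define V where "V = \<Union>G"
  define N where "N = nbr G v"
  define W where "W = \<Union>G - insert v N"
  define GW where "GW = {e\<in>G. e \<subseteq> W}"
  define d where "d = card N"
  have fV: "finite V" unfolding V_def using sg_finite_V[OF sg] .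
  have NV: "N \<subseteq> V" unfolding N_def V_def using nbr_sub_V .
  have fN: "finite N" using NV fV finite_subset by blast
  have fW: "finite W" unfolding W_def using sg_finite_V[OF sg] by simp
  have vN: "v \<notin> N" unfolding N_def using nbr_noloop[OF sg] .
  have vW: "v \<notin> W" unfolding W_def by simp
  have NW: "N \<inter> W = {}" unfolding W_def by auto
  have VNW: "V = insert v (N \<union> W)" using NV vV unfolding W_def V_def by auto
  have sgW: "simple_graph GW" unfolding GW_def by (rule sg_sub[OF sg]) auto
  have L1: "ex_H GW + d \<le> m" unfolding m_def d_def GW_def W_def N_def using lem1[OF sg] .
  have S1: "(\<Sum>u\<in>N. card (nbr G u)) \<le> d * d"
  proof -
    have "\<And>u. u \<in> N \<Longrightarrow> card (nbr G u) \<le> d"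
      using vmax NV unfolding d_def N_def V_def by blast
    from sum_bounded_above[of N "\<lambda>u. card (nbr G u)" d, OF this] show ?thesis unfolding d_def by simp
  qed
  have L3: "card (nbr G u \<inter> W) + d \<le> m + 1" if "u \<in> N" for u
    using lem3[OF sg, of u v] that unfolding N_def W_def m_def d_def by blast
  have S2: "(\<Sum>u\<in>N. card (nbr G u \<inter> W)) \<le> d * (m + 1 - d)"
  proof -
    have "\<And>u. u \<in> N \<Longrightarrow> card (nbr G u \<inter> W) \<le> m + 1 - d" using L3 by fastforce
    from sum_bounded_above[of N "\<lambda>u. card (nbr G u \<inter> W)" "m + 1 - d", OF this]
    show ?thesis unfolding d_def by simp
  qed
  have D: "2 * card G = d + (\<Sum>u\<in>N. card (nbr G u)) + (\<Sum>u\<in>N. card (nbr G u \<inter> W)) + 2 * card GW"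
    unfolding d_def N_def W_def GW_def using decomp[OF sg] .
  have VW: "2 * card GW \<le> ex_H GW * (ex_H GW + 2)" using vizing[OF sgW] .
  have "2 * card G + d * (m - d) \<le> d + d*d + d*(m+1-d) + ex_H GW * (ex_H GW + 2) + d * (m - d)"
    using D S1 S2 VW by linarith
  also have "\<dots> \<le> m * (m+2)" using arith2[OF L1] .
  finally have A1: "2 * card G + d * (m - d) \<le> m * (m + 2)" .
  have d1: "1 \<le> d" using nbr_nonempty[OF sg vV] fN unfolding d_def N_def
    by (simp add: Suc_leI card_gt_0_iff)
  have dm: "d = m"
  proof (rule ccontr)
    assume "d \<noteq> m"
    then have "d < m" using L1 by simp
    then have "1 \<le> m - d" by simp
    have dd: "d * (m - d) \<le> 1" using A1 tt unfolding m_def by linarith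
    have "d * 1 \<le> d * (m - d)" using \<open>1 \<le> m - d\<close> by (rule mult_le_mono2)
    then have "d = 1" using dd d1 by linarith
    then have "m - d = 1" using dd \<open>1 \<le> m - d\<close> by simp
    then have "m = 2" using \<open>d = 1\<close> by simp
    have tt': "m * (m + 2) \<le> 2 * card G + 1" using tt unfolding m_def .
    show False using A1 tt' \<open>d = 1\<close> \<open>m = 2\<close> \<open>m - d = 1\<close> by simp presburger
  qed
  have "ex_H GW = 0" using L1 dm by simp
  then have "card GW = 0" using VW by simp
  then have GW0: "GW = {}" using sg_finite[OF sgW] by simp
  define c where "c u = card (nbr G u \<inter> W)" for u
  define a where "a u = card (nbr G u \<inter> N)" for u
  define s where "s u = m + 1 - card (nbr G u) - c u" for u
  have c1: "c u \<le> 1" if "u \<in> N" for u using L3[OF that] dm unfolding c_def by simp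
  have degm: "card (nbr G u) \<le> m" for u using deg_le[OF sg] unfolding m_def .
  have degsplit: "card (nbr G u) = 1 + a u + c u" if uN: "u \<in> N" for u
  proof -
    have "v \<in> nbr G u" using uN unfolding N_def using nbr_sym by metis
    moreover have "nbr G u \<subseteq> V" unfolding V_def using nbr_sub_V .
    ultimately have eq: "nbr G u = insert v ((nbr G u \<inter> N) \<union> (nbr G u \<inter> W))" using VNW by auto
    have "card (nbr G u) = card (insert v ((nbr G u \<inter> N) \<union> (nbr G u \<inter> W)))"
      using eq by (rule arg_cong[where f=card])
    also have "\<dots> = 1 + card ((nbr G u \<inter> N) \<union> (nbr G u \<inter> W))"
      using vN vW fN fW by simp
    also have "card ((nbr G u \<inter> N) \<union> (nbr G u \<inter> W)) = a u + c u"
      unfolding a_def c_def by (rule card_Un_disjoint) (use NW fN fW in auto)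
    finally show ?thesis by simp
  qed
  have NNcard: "card (N - {u} - nbr G u) + a u + 1 = m" if uN: "u \<in> N" for u
  proof -
    have "u \<notin> nbr G u" using nbr_noloop[OF sg] .
    then have sub: "nbr G u \<inter> N \<subseteq> N - {u}" by auto
    have "N - {u} - nbr G u = (N - {u}) - (nbr G u \<inter> N)" by auto
    then have "card (N - {u} - nbr G u) = card (N - {u}) - a u"
      unfolding a_def using card_Diff_subset[OF _ sub] fN by (metis finite_subset sub finite_Diff)
    moreover have "a u \<le> card (N - {u})" unfolding a_def using card_mono[OF _ sub] fN by simp
    moreover have "card (N - {u}) + 1 = m" using uN fN dm unfolding d_def
      by (metis card_Diff1_less card_Diff_singleton Suc_pred One_nat_def add.commute plus_1_eq_Suc card.remove)
    ultimately show ?thesis by linarith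
  qed
  have sdef: "card (nbr G u) + c u + s u = m + 1" if "u \<in> N" for u
    using degm[of u] c1[OF that] unfolding s_def by simp
  have sumS: "(\<Sum>u\<in>N. s u) \<le> 1"
  proof -
    have "(\<Sum>u\<in>N. card (nbr G u) + c u + s u) = (\<Sum>u\<in>N. m + 1)"
      using sdef by (rule sum.cong[OF refl])
    also have "\<dots> = m * (m + 1)" using dm unfolding d_def by simp
    finally have "(\<Sum>u\<in>N. card (nbr G u)) + (\<Sum>u\<in>N. c u) + (\<Sum>u\<in>N. s u) = m * (m + 1)"
      by (simp add: sum.distrib)
    moreover have "2 * card G = m + (\<Sum>u\<in>N. card (nbr G u)) + (\<Sum>u\<in>N. c u)"
      using D GW0 dm unfolding c_def by simp
    moreover have "m * (m + 1) + m = m * (m + 2)" by (simp add: algebra_simps)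
    ultimately show ?thesis using tt unfolding m_def by linarith
  qed
  have s1: "s u \<le> 1" if "u \<in> N" for u
    using member_le_sum[of u N s] that fN sumS by simp
  have pair: "s u1 + s u2 \<le> 1" if "u1 \<in> N" "u2 \<in> N" "u1 \<noteq> u2" for u1 u2
    using sum_pair_le[OF fN that, of s] sumS by simp
  have K1: "N - {u} \<subseteq> nbr G u" if "u \<in> N" "c u = 0" for u
  proof -
    have "card (N - {u} - nbr G u) = 0"
      using NNcard[OF that(1)] degsplit[OF that(1)] sdef[OF that(1)] s1[OF that(1)] that(2) by simp
    then show ?thesis using fN by auto
  qed
  have K2: "card (N - {u} - nbr G u) \<le> 1" if "u \<in> N" "s u = 0" for u
    using NNcard[OF that(1)] degsplit[OF that(1)] sdef[OF that(1)] that(2) c1[OF that(1)] by linarith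
  have Wne: "W \<noteq> {}"
  proof
    assume W0: "W = {}"
    then have c0: "\<And>u. c u = 0" unfolding c_def by simp
    have spos: "1 \<le> s u" if "u \<in> N" for u
      using NNcard[OF that] degsplit[OF that] sdef[OF that] c0[of u] by simp
    have "2 \<le> card N" using dm m2 unfolding d_def m_def by simp
    then obtain u1 u2 where "u1 \<in> N" "u2 \<in> N" "u1 \<noteq> u2"
      by (metis card_le_Suc_iff numeral_2_eq_2 Suc_le_D insertCI)
    then show False using pair[of u1 u2] spos[of u1] spos[of u2] by linarith
  qed
  have W1: "card W \<le> 1"
  proof (rule ccontr)
    assume "\<not> card W \<le> 1"
    then have W2: "2 \<le> card W" by simp
    have wN: "\<exists>u. u \<in> N \<and> {w,u} \<in> G" if wW: "w \<in> W" for w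
    proof -
      have "w \<in> \<Union>G" using wW unfolding W_def by auto
      then obtain y where y: "y \<in> nbr G w" using nbr_nonempty[OF sg] by blast
      have "y \<noteq> v" using y wW NW nbr_sym unfolding N_def by (metis disjoint_iff)
      moreover have "y \<notin> W"
      proof
        assume "y \<in> W"
        then have "{w,y} \<in> GW" using y wW unfolding GW_def nbr_def by auto
        then show False using GW0 by simp
      qed
      moreover have "y \<in> V" using y nbr_sub_V unfolding V_def by blast
      ultimately have "y \<in> N" using VNW by auto
      then show ?thesis using y unfolding nbr_def by blast
    qed
    define E where "E = {u\<in>N. c u = 1 \<and> s u = 1}"
    define r where "r w = (if \<exists>u\<in>E. {w,u} \<in> G then (SOME u. u \<in> E \<and> {w,u} \<in> G)
                           else (SOME u. u \<in> N \<and> {w,u} \<in> G))" for w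
    have rN: "r w \<in> N \<and> {w, r w} \<in> G" if "w \<in> W" for w
    proof (cases "\<exists>u\<in>E. {w,u} \<in> G")
      case True
      then have "\<exists>u. u \<in> E \<and> {w,u} \<in> G" by blast
      from someI_ex[OF this] show ?thesis unfolding r_def using True unfolding E_def by auto
    next
      case False
      from someI_ex[OF wN[OF that]] show ?thesis unfolding r_def using False by auto
    qed
    have Euniq: "u1 = u2" if "u1 \<in> E" "u2 \<in> E" for u1 u2
      using pair[of u1 u2] that unfolding E_def by fastforce
    have rinj: "inj_on r W"
    proof (rule inj_onI)
      fix w1 w2 assume w: "w1 \<in> W" "w2 \<in> W" "r w1 = r w2"
      show "w1 = w2"
      proof (rule ccontr)
        assume ne: "w1 \<noteq> w2"
        let ?u = "r w1"
        have uN: "?u \<in> N" using rN[OF w(1)] by blast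
        have "{w1, w2} \<subseteq> nbr G ?u \<inter> W" using rN[OF w(1)] rN[OF w(2)] w
          unfolding nbr_def by (auto simp: insert_commute)
        then have "card {w1,w2} \<le> c ?u" unfolding c_def
          using card_mono[OF _ \<open>{w1, w2} \<subseteq> nbr G ?u \<inter> W\<close>] fW by simp
        then show False using ne c1[OF uN] by simp
      qed
    qed
    have ER: "E \<subseteq> r ` W"
    proof
      fix u assume uE: "u \<in> E"
      then have uN: "u \<in> N" and "c u = 1" unfolding E_def by auto
      then obtain w where w: "w \<in> nbr G u \<inter> W" unfolding c_def
        by (metis card.empty all_not_in_conv zero_neq_one)
      then have wW: "w \<in> W" and wu: "{w,u} \<in> G" unfolding nbr_def by (auto simp: insert_commute)
      then have ex: "\<exists>u'\<in>E. {w,u'} \<in> G" using uE by blast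
      then have "\<exists>u'. u' \<in> E \<and> {w,u'} \<in> G" by blast
      from someI_ex[OF this] have "r w \<in> E" unfolding r_def using ex by auto
      then have "r w = u" using Euniq uE by blast
      then show "u \<in> r ` W" using wW by blast
    qed
    define R where "R = r ` W"
    have RN: "R \<subseteq> N" unfolding R_def using rN by blast
    have cR: "card R = card W" unfolding R_def using card_image[OF rinj] .
    have dom: "\<exists>y\<in>R. {x,y} \<in> G" if xV: "x \<in> V - R" for x
    proof -
      have "x = v \<or> x \<in> W \<or> x \<in> N - R" using xV VNW by auto
      then show ?thesis
      proof (elim disjE)
        assume "x = v"
        obtain w where "w \<in> W" using Wne by blast
        then have "r w \<in> R" "r w \<in> N" using rN unfolding R_def by auto
        then show ?thesis using \<open>x = v\<close> unfolding N_def nbr_def by blast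
      next
        assume "x \<in> W"
        then show ?thesis using rN unfolding R_def by blast
      next
        assume xNR: "x \<in> N - R"
        then have xN: "x \<in> N" by simp
        have RNx: "R \<subseteq> N - {x}" using RN xNR by auto
        show ?thesis
        proof (cases "c x = 0")
          case True
          have "R \<noteq> {}" using cR W2 by auto
          then obtain y where "y \<in> R" by blast
          then have "y \<in> nbr G x" using K1[OF xN True] RNx by blast
          then show ?thesis using \<open>y \<in> R\<close> unfolding nbr_def by blast
        next
          case False
          then have cx: "c x = 1" using c1[OF xN] by simp
          have "x \<notin> E" using xNR ER unfolding R_def by blast
          then have "s x = 0" using cx s1[OF xN] xN unfolding E_def by auto
          then have k: "card (N - {x} - nbr G x) \<le> 1" using K2[OF xN] by simp
          have "\<not> R \<subseteq> N - {x} - nbr G x"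
          proof
            assume "R \<subseteq> N - {x} - nbr G x"
            then have "card R \<le> card (N - {x} - nbr G x)" using card_mono fN by (metis finite_Diff)
            then show False using k cR W2 by simp
          qed
          then obtain y where "y \<in> R" "y \<in> nbr G x" using RNx by blast
          then show ?thesis unfolding nbr_def by blast
        qed
      qed
    qed
    define p where "p x = (SOME y. y \<in> R \<and> {x,y} \<in> G)" for x
    have pR: "p x \<in> R \<and> {x, p x} \<in> G" if "x \<in> V - R" for x
    proof -
      have "\<exists>y. y \<in> R \<and> {x,y} \<in> G" using dom[OF that] by blast
      from someI_ex[OF this] show ?thesis unfolding p_def .
    qed
    have "star_sys G (V - R) p"
      unfolding star_sys_def using pR fV by auto
    then have le: "card (V - R) \<le> m" using star_le[OF sg] unfolding m_def by blast
    have RV: "R \<subseteq> V" using RN NV by auto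
    have cV: "card V = 1 + m + card W"
    proof -
      have "card V = card (insert v (N \<union> W))" using VNW by simp
      also have "\<dots> = 1 + card (N \<union> W)" using vN vW fN fW by simp
      also have "card (N \<union> W) = card N + card W" by (rule card_Un_disjoint) (use fN fW NW in auto)
      finally show ?thesis using dm unfolding d_def by simp
    qed
    have "card (V - R) = card V - card R" using card_Diff_subset[OF _ RV] fV finite_subset RV by metis
    then show False using le cV cR by simp
  qed
  have "card W = 1" using W1 Wne fW by (simp add: le_Suc_eq card_0_eq)
  have "card V = card (insert v (N \<union> W))" using VNW by simp
  also have "\<dots> = 1 + card (N \<union> W)" using vN vW fN fW by simp
  also have "card (N \<union> W) = card N + card W" by (rule card_Un_disjoint) (use fN fW NW in auto)
  finally show ?thesis using dm \<open>card W = 1\<close> unfolding d_def m_def V_def by simp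
qed

definition Kset :: "nat set \<Rightarrow> nat set set" where
  "Kset V = {e. e \<subseteq> V \<and> card e = 2}"

lemma Kset_card: "finite V \<Longrightarrow> card (Kset V) = card V choose 2"
  unfolding Kset_def using n_subsets by blast

lemma Kset_finite: "finite V \<Longrightarrow> finite (Kset V)"
  unfolding Kset_def by (rule finite_subset[of _ "Pow V"]) auto

lemma complete_eq: "{{u,v} | u v. u \<le> k \<and> v \<le> k \<and> u \<noteq> v} = Kset {0..k}"
proof (intro set_eqI iffI)
  fix e assume "e \<in> {{u,v} | u v. u \<le> k \<and> v \<le> k \<and> u \<noteq> v}"
  then obtain u v where "e = {u,v}" "u \<le> k" "v \<le> k" "u \<noteq> v" by blast
  then show "e \<in> Kset {0..k}" unfolding Kset_def by auto
next
  fix e assume "e \<in> Kset {0..k}"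
  then have e: "e \<subseteq> {0..k}" "card e = 2" unfolding Kset_def by auto
  then obtain u v where uv: "e = {u,v}" "u \<noteq> v" by (meson card_2_iff)
  then show "e \<in> {{u,v} | u v. u \<le> k \<and> v \<le> k \<and> u \<noteq> v}" using e(1) by auto
qed

lemma Gk_eq: "G_k k = Kset {0..k} - removed_edges k"
  unfolding G_k_def complete_eq ..

definition Mset :: "nat \<Rightarrow> nat set set" where
  "Mset p = (\<lambda>i. {2*i, 2*i+1}) ` {..<p}"

lemma Mset_eq: "{{2*i, 2*i+1} | i. i < p} = Mset p"
  unfolding Mset_def by auto

lemma Mset_card: "card (Mset p) = p"
proof -
  have "inj_on (\<lambda>i::nat. {2*i, 2*i+1}) {..<p}"
    unfolding inj_on_def by (auto simp: doubleton_eq_iff)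
  then show ?thesis unfolding Mset_def by (simp add: card_image)
qed

lemma removed_odd: "odd k \<Longrightarrow> removed_edges k = Mset ((k+1) div 2)"
  unfolding removed_edges_def using Mset_eq by simp

lemma removed_even: "even k \<Longrightarrow> removed_edges k = Mset ((k-2) div 2) \<union> {{k-2, k-1}, {k-1, k}}"
  unfolding removed_edges_def using Mset_eq by simp

lemma Mset_sub: "2 * p \<le> Suc n \<Longrightarrow> Mset p \<subseteq> Kset {0..n}"
  unfolding Mset_def Kset_def by auto

lemma removed_sub:
  assumes "3 \<le> k" shows "removed_edges k \<subseteq> Kset {0..k}"
proof (cases "odd k")
  case True
  then show ?thesis unfolding removed_odd[OF True] by (intro Mset_sub) auto
next
  case False
  then have "Mset ((k-2) div 2) \<subseteq> Kset {0..k}" by (intro Mset_sub) auto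
  moreover have "{{k-2, k-1}, {k-1, k}} \<subseteq> Kset {0..k}" unfolding Kset_def using assms by auto
  ultimately show ?thesis using removed_even[of k] False by auto
qed

lemma removed_card:
  assumes k3: "3 \<le> k"
  shows "card (removed_edges k) = (if even k then (k+2) div 2 else (k+1) div 2)"
proof (cases "odd k")
  case True
  then show ?thesis unfolding removed_odd[OF True] Mset_card by simp
next
  case False
  then have ek: "even k" by simp
  define p where "p = (k-2) div 2"
  have p2: "2 * p = k - 2" unfolding p_def using ek k3 by (auto elim!: evenE)
  have notin: "k - 1 \<notin> e" if "e \<in> Mset p" for e
  proof -
    from that obtain i where i: "i < p" "e = {2*i, 2*i+1}" unfolding Mset_def by auto
    then have "2*i+1 < k - 1" using p2 by linarith
    then show ?thesis using i(2) by auto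
  qed
  have disj: "Mset p \<inter> {{k-2, k-1}, {k-1, k}} = {}" using notin by auto
  have AB: "{k-2, k-1} \<noteq> {k-1, (k::nat)}" using k3 by (auto simp: doubleton_eq_iff)
  have c2: "card {{k-2, k-1}, {k-1, k::nat}} = 2" using AB by simp
  have fM: "finite (Mset p)" unfolding Mset_def by simp
  have "card (Mset p \<union> {{k-2, k-1}, {k-1, k}}) = card (Mset p) + card {{k-2, k-1}, {k-1, k::nat}}"
    by (rule card_Un_disjoint) (use fM disj in auto)
  then have "card (removed_edges k) = p + 2"
    using removed_even[OF ek] Mset_card c2 unfolding p_def by simp
  moreover have "p + 2 = (k+2) div 2" using p2 k3 by linarith
  ultimately show ?thesis using ek by simp
qed

lemma pair_in_Mset:
  assumes "c div 2 < p"
  shows "{c, if even c then c+1 else c-1} \<in> Mset p"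
proof -
  define i where "i = c div 2"
  have e: "{c, if even c then c+1 else c-1} = {2*i, 2*i+1}"
  proof (cases "even c")
    case True
    then have "c = 2*i" unfolding i_def by presburger
    then show ?thesis using True by simp
  next
    case False
    then have "c = 2*i+1" unfolding i_def by presburger
    then show ?thesis using False by (simp add: insert_commute)
  qed
  show ?thesis unfolding e Mset_def using assms unfolding i_def by blast
qed

lemma partner:
  assumes k: "3 \<le> k" and c: "c \<le> k"
  shows "\<exists>c'. c' \<noteq> c \<and> {c,c'} \<in> removed_edges k"
proof (cases "odd k")
  case True
  have "c div 2 < (k+1) div 2" using True c by presburger
  then have "{c, if even c then c+1 else c-1} \<in> removed_edges k"
    unfolding removed_odd[OF True] by (rule pair_in_Mset)
  moreover have "(if even c then c+1 else c-1) \<noteq> c" using True c by presburger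
  ultimately show ?thesis by blast
next
  case False
  then have ek: "even k" by simp
  show ?thesis
  proof (cases "c < k - 2")
    case True
    have "c div 2 < (k-2) div 2" using True ek by presburger
    then have "{c, if even c then c+1 else c-1} \<in> removed_edges k"
      unfolding removed_even[OF ek] using pair_in_Mset by blast
    moreover have "(if even c then c+1 else c-1) \<noteq> c" using True by presburger
    ultimately show ?thesis by blast
  next
    case False
    then have "c = k - 2 \<or> c = k - 1 \<or> c = k" using c by linarith
    moreover have "{k-2, k-1} \<in> removed_edges k" "{k-1, k} \<in> removed_edges k"
      using removed_even[OF ek] by auto
    moreover have "k - 2 \<noteq> k - 1" "k - 1 \<noteq> k" using k by auto
    ultimately show ?thesis by (metis insert_commute)
  qed
qed

lemma Gk_simple: "simple_graph (G_k k)"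
  unfolding simple_graph_def Gk_eq using Kset_finite[of "{0..k}"] unfolding Kset_def by auto

lemma Gk_card:
  assumes "3 \<le> k"
  shows "card (G_k k) = (if even k then (Suc k choose 2) - (k+2) div 2 else (Suc k choose 2) - (k+1) div 2)"
proof -
  have "card (G_k k) = card (Kset {0..k}) - card (removed_edges k)"
    unfolding Gk_eq by (rule card_Diff_subset) (use Kset_finite removed_sub[OF assms] finite_subset in blast)+
  also have "card (Kset {0..k}) = Suc k choose 2" using Kset_card[of "{0..k}"] by simp
  finally show ?thesis using removed_card[OF assms] by simp
qed

lemma Gk_exH:
  assumes k: "3 \<le> k"
  shows "ex_H (G_k k) < k"
proof (rule ccontr)
  assume "\<not> ex_H (G_k k) < k"
  then have ge: "k \<le> ex_H (G_k k)" by simp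
  obtain X p where ss: "star_sys (G_k k) X p" "card X = ex_H (G_k k)"
    using EXH[OF Gk_simple] by blast
  have edges: "\<And>x. x \<in> X \<Longrightarrow> {x, p x} \<in> G_k k" and nX: "\<And>x. x \<in> X \<Longrightarrow> p x \<notin> X"
    and fX: "finite X"
    using ss(1) unfolding star_sys_def by auto
  have inK: "\<And>x. x \<in> X \<Longrightarrow> x \<le> k \<and> p x \<le> k \<and> x \<noteq> p x"
  proof -
    fix x assume "x \<in> X"
    then have "{x, p x} \<in> Kset {0..k}" using edges unfolding Gk_eq by blast
    then have "{x, p x} \<subseteq> {0..k}" "card {x, p x} = 2" unfolding Kset_def by auto
    then show "x \<le> k \<and> p x \<le> k \<and> x \<noteq> p x" by (cases "x = p x") auto
  qed
  have sub: "X \<union> p ` X \<subseteq> {0..k}" using inK by auto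
  have disj: "X \<inter> p ` X = {}" using nX by auto
  have "card (X \<union> p ` X) \<le> k + 1" using card_mono[OF _ sub] by simp
  moreover have "card (X \<union> p ` X) = card X + card (p ` X)"
    by (rule card_Un_disjoint) (use fX disj in auto)
  ultimately have "card (p ` X) \<le> 1" using ss(2) ge by simp
  moreover have "X \<noteq> {}" using ss(2) ge k by auto
  moreover have "card (p ` X) \<noteq> 0" using \<open>X \<noteq> {}\<close> fX by simp
  ultimately have "card (p ` X) = 1" by linarith
  then obtain c where pc: "p ` X = {c}" using card_1_singletonE by blast
  obtain x0 where x0: "x0 \<in> X" using \<open>X \<noteq> {}\<close> by blast
  then have "p x0 = c" using pc by blast
  then have ck: "c \<le> k" using inK[OF x0] by simp
  obtain c' where c': "c' \<noteq> c" "{c,c'} \<in> removed_edges k" using partner[OF k ck] by blast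
  have c'k: "c' \<le> k" using c'(2) removed_sub[OF k] unfolding Kset_def by auto
  have "X \<subseteq> {0..k} - {c, c'}"
  proof
    fix x assume x: "x \<in> X"
    have pxc: "p x = c" using pc x by blast
    have "{x, c} \<in> G_k k" using edges[OF x] pxc by simp
    then have "{x, c} \<notin> removed_edges k" unfolding Gk_eq by blast
    then have "{c, x} \<notin> removed_edges k" by (simp add: insert_commute)
    then have "x \<noteq> c'" using c'(2) by auto
    moreover have "x \<noteq> c" using inK[OF x] pxc by simp
    ultimately show "x \<in> {0..k} - {c, c'}" using inK[OF x] by simp
  qed
  then have "card X \<le> card ({0..k} - {c, c'})" by (intro card_mono) auto
  also have "\<dots> = k - 1" using ck c'k c'(1) by (simp add: card_Diff_subset)
  finally show False using ss(2) ge k by simp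
qed

lemma Mset_Suc: "Mset (Suc n) = insert {2*n, 2*n+1} (Mset n)"
  unfolding Mset_def by (simp add: lessThan_Suc)

lemma edge2_cases:
  assumes "card e = 2" "a \<in> e"
  obtains y where "e = {a,y}" "y \<noteq> a"
proof -
  obtain u v where uv: "e = {u,v}" "u \<noteq> v" using assms(1) by (meson card_2_iff)
  show ?thesis
  proof (cases "a = u")
    case True then show ?thesis using that uv by blast
  next
    case False then have "a = v" using assms(2) uv by auto
    then show ?thesis using that uv by (metis insert_commute)
  qed
qed

lemma PM:
  assumes "finite V" "card V = 2*n" "\<forall>e\<in>C. e \<subseteq> V \<and> card e = 2" "\<forall>x\<in>V. card (nbr C x) = 1"
  shows "\<exists>f. bij_betw f V {0..<2*n} \<and> (\<lambda>e. f ` e) ` C = Mset n"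
  using assms
proof (induction n arbitrary: V C)
  case 0
  then have "V = {}" by simp
  then have "C = {}" using "0.prems"(3) by fastforce
  then show ?case using \<open>V = {}\<close> unfolding Mset_def by (auto simp: bij_betw_def)
next
  case (Suc n)
  note fV = Suc.prems(1) and cV = Suc.prems(2) and CE = Suc.prems(3) and deg1 = Suc.prems(4)
  have "V \<noteq> {}" using cV by auto
  then obtain a where aV: "a \<in> V" by blast
  obtain b where nb: "nbr C a = {b}" using deg1 aV card_1_singletonE by blast
  have abC: "{a,b} \<in> C" using nb unfolding nbr_def by auto
  have bV: "b \<in> V" using CE abC by blast
  have ab: "a \<noteq> b"
  proof
    assume "a = b"
    then have "card {a,b} = 1" by simp
    then show False using CE abC by fastforce
  qed
  have "a \<in> nbr C b" using nb nbr_sym by fastforce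
  then have na: "nbr C b = {a}" using deg1 bV card_1_singletonE by (metis singletonD)
  define V' where "V' = V - {a,b}"
  define C' where "C' = C - {{a,b}}"
  have fV': "finite V'" unfolding V'_def using fV by simp
  have cV': "card V' = 2*n" unfolding V'_def using cV aV bV ab fV by (simp add: card_Diff_subset)
  have CE': "\<forall>e\<in>C'. e \<subseteq> V' \<and> card e = 2"
  proof
    fix e assume eC': "e \<in> C'"
    then have eC: "e \<in> C" and ne: "e \<noteq> {a,b}" unfolding C'_def by auto
    have c2: "card e = 2" using CE eC by blast
    have eV: "e \<subseteq> V" using CE eC by blast
    have "a \<notin> e"
    proof
      assume "a \<in> e"
      then obtain y where "e = {a,y}" using edge2_cases[OF c2 \<open>a \<in> e\<close>] by metis
      then have "y \<in> nbr C a" using eC unfolding nbr_def by simp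
      then show False using nb ne \<open>e = {a,y}\<close> by simp
    qed
    moreover have "b \<notin> e"
    proof
      assume "b \<in> e"
      then obtain y where "e = {b,y}" using edge2_cases[OF c2 \<open>b \<in> e\<close>] by metis
      then have "y \<in> nbr C b" using eC unfolding nbr_def by simp
      then show False using na ne \<open>e = {b,y}\<close> by (simp add: insert_commute)
    qed
    ultimately show "e \<subseteq> V' \<and> card e = 2" unfolding V'_def using eV c2 by auto
  qed
  have deg1': "\<forall>x\<in>V'. card (nbr C' x) = 1"
  proof
    fix x assume x: "x \<in> V'"
    have "nbr C' x = nbr C x"
      unfolding nbr_def C'_def using x unfolding V'_def by (auto simp: doubleton_eq_iff)
    then show "card (nbr C' x) = 1" using deg1 x unfolding V'_def by simp
  qed
  obtain f' where f': "bij_betw f' V' {0..<2*n}" "(\<lambda>e. f' ` e) ` C' = Mset n"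
    using Suc.IH[OF fV' cV' CE' deg1'] by blast
  define f where "f x = (if x = a then 2*n else if x = b then 2*n+1 else f' x)" for x
  have feq: "\<And>x. x \<in> V' \<Longrightarrow> f x = f' x" unfolding f_def V'_def by auto
  have b1: "bij_betw f V' {0..<2*n}" using f' bij_betw_cong feq by metis
  have b2: "bij_betw f {a,b} {2*n, 2*n+1}"
    unfolding bij_betw_def f_def using ab by auto
  have "bij_betw f (V' \<union> {a,b}) ({0..<2*n} \<union> {2*n, 2*n+1})"
    by (rule bij_betw_combine[OF b1 b2]) auto
  moreover have "V' \<union> {a,b} = V" unfolding V'_def using aV bV by auto
  moreover have "{0..<2*n} \<union> {2*n, 2*n+1} = {0..<2*Suc n}" by auto
  ultimately have bf: "bij_betw f V {0..<2*Suc n}" by simp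
  have CC: "C = insert {a,b} C'" unfolding C'_def using abC by auto
  have "(\<lambda>e. f ` e) ` C' = (\<lambda>e. f' ` e) ` C'"
  proof (rule image_cong[OF refl])
    fix e assume "e \<in> C'"
    then have "e \<subseteq> V'" using CE' by blast
    then show "f ` e = f' ` e" using feq by (auto intro!: image_cong)
  qed
  then have "(\<lambda>e. f ` e) ` C = insert (f ` {a,b}) (Mset n)" unfolding CC using f'(2) by simp
  also have "f ` {a,b} = {2*n, 2*n+1}" unfolding f_def using ab by auto
  finally have "(\<lambda>e. f ` e) ` C = Mset (Suc n)" unfolding Mset_Suc .
  then show ?case using bf by blast
qed

lemma Kset_image:
  assumes bij: "bij_betw f V W"
  shows "(\<lambda>e. f ` e) ` Kset V = Kset W"
proof
  have inj: "inj_on f V" and im: "f ` V = W" using bij unfolding bij_betw_def by auto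
  show "(\<lambda>e. f ` e) ` Kset V \<subseteq> Kset W"
  proof
    fix e' assume "e' \<in> (\<lambda>e. f ` e) ` Kset V"
    then obtain e where e: "e \<subseteq> V" "card e = 2" "e' = f ` e" unfolding Kset_def by auto
    have "card (f ` e) = card e" by (rule card_image[OF inj_on_subset[OF inj e(1)]])
    then show "e' \<in> Kset W" unfolding Kset_def using e im by auto
  qed
  show "Kset W \<subseteq> (\<lambda>e. f ` e) ` Kset V"
  proof
    fix e' assume "e' \<in> Kset W"
    then have e': "e' \<subseteq> W" "card e' = 2" unfolding Kset_def by auto
    define e where "e = {x\<in>V. f x \<in> e'}"
    have fe: "f ` e = e'" unfolding e_def using e'(1) im by auto
    have eV: "e \<subseteq> V" unfolding e_def by auto
    have "card (f ` e) = card e" by (rule card_image[OF inj_on_subset[OF inj eV]])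
    then have "card e = 2" using fe e'(2) by simp
    then have "e \<in> Kset V" unfolding Kset_def using eV by auto
    then show "e' \<in> (\<lambda>e. f ` e) ` Kset V" using fe by blast
  qed
qed

lemma iso_from:
  assumes sg: "simple_graph G"
    and bij: "bij_betw f (\<Union>G) {0..k}"
    and rem: "(\<lambda>e. f ` e) ` (Kset (\<Union>G) - G) = removed_edges k"
  shows "graph_iso G (G_k k)"
proof -
  define V where "V = \<Union>G"
  have GK: "G \<subseteq> Kset V" using sg unfolding simple_graph_def Kset_def V_def by blast
  have GG: "Kset V - (Kset V - G) = G" using GK by blast
  have inj: "inj_on f V" using bij unfolding bij_betw_def V_def by blast
  have injh: "inj_on (\<lambda>e. f ` e) (Kset V)"
  proof (rule inj_onI)
    fix e1 e2 assume e: "e1 \<in> Kset V" "e2 \<in> Kset V" "f ` e1 = f ` e2"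
    then have "e1 \<subseteq> V" "e2 \<subseteq> V" unfolding Kset_def by auto
    then show "e1 = e2" using inj_on_image_eq_iff[OF inj] e(3) by blast
  qed
  have "(\<lambda>e. f ` e) ` (Kset V - (Kset V - G)) = (\<lambda>e. f ` e) ` (Kset V) - (\<lambda>e. f ` e) ` (Kset V - G)"
    by (rule inj_on_image_set_diff[OF injh]) auto
  then have "(\<lambda>e. f ` e) ` G = (\<lambda>e. f ` e) ` (Kset V) - (\<lambda>e. f ` e) ` (Kset V - G)"
    unfolding GG .
  also have "\<dots> = Kset {0..k} - removed_edges k"
    using Kset_image[OF bij] rem unfolding V_def by simp
  finally have hG: "(\<lambda>e. f ` e) ` G = G_k k" unfolding Gk_eq .
  have "\<Union>(G_k k) = f ` (\<Union>G)" unfolding hG[symmetric] by auto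
  also have "\<dots> = {0..k}" using bij unfolding bij_betw_def by simp
  finally have "bij_betw f (\<Union>G) (\<Union>(G_k k))" using bij by simp
  then show ?thesis unfolding graph_iso_def using hG by blast
qed

definition Bk :: "nat \<Rightarrow> nat" where
  "Bk k = (if even k then (Suc k choose 2) - (k+2) div 2 else (Suc k choose 2) - (k+1) div 2)"

lemma Bval:
  assumes "3 \<le> k"
  shows "2 * Bk k = (if even k then k*k - 2 else k*k - 1)"
proof -
  have ch: "Suc k choose 2 = Suc k * k div 2" using choose_two[of "Suc k"] by simp
  show ?thesis
  proof (cases "even k")
    case True
    then obtain j where j: "k = 2*j" by (auto elim!: evenE)
    have "Suc k * k = 2 * (Suc k * j)" using j by simp
    then have c: "Suc k choose 2 = Suc k * j" using ch by simp
    have "(k+2) div 2 = j + 1" using j by simp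
    then have "Bk k = (2*j+1)*j - (j+1)" unfolding Bk_def using True c j by simp
    moreover have "1 \<le> j" using j assms by simp
    ultimately show ?thesis using True j by (simp add: algebra_simps)
  next
    case False
    then obtain j where j: "k = 2*j+1" by (auto elim!: oddE)
    have "Suc k * k = 2 * ((j+1) * k)" using j by simp
    then have c: "Suc k choose 2 = (j+1) * (2*j+1)" using ch j by simp
    have "(k+1) div 2 = j + 1" using j by simp
    then have "Bk k = (j+1)*(2*j+1) - (j+1)" unfolding Bk_def using False c j by simp
    then show ?thesis using False j by (simp add: algebra_simps)
  qed
qed

lemma kk_sub: "1 \<le> k \<Longrightarrow> (k - 1) * (k - 1 + 2) = k * k - (1::nat)"
  by (cases k) (simp_all add: algebra_simps)

lemma par_aux: "even (K::nat) \<Longrightarrow> 2*c \<le> K - 1 \<Longrightarrow> 2*c \<le> K - 2"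
  by presburger

lemma upper:
  assumes k: "3 \<le> k" and sg: "simple_graph G" and ex: "ex_H G < k"
  shows "card G \<le> Bk k"
proof -
  define m where "m = ex_H G"
  have "2 * card G \<le> m * (m + 2)" using vizing[OF sg] unfolding m_def .
  also have "\<dots> \<le> (k - 1) * (k - 1 + 2)" using ex unfolding m_def by (intro mult_le_mono) auto
  also have "\<dots> = k * k - 1" using k kk_sub by simp
  finally have g: "2 * card G \<le> k * k - 1" .
  show ?thesis
  proof (cases "even k")
    case True
    then have "even (k*k)" by simp
    from par_aux[OF this g] show ?thesis using Bval[OF k] True by simp
  next
    case False
    then show ?thesis using g Bval[OF k] by simp
  qed
qed

lemma E_H_val:
  assumes k: "3 \<le> k"
  shows "E_H k = enat (Bk k)"
  unfolding E_H_def
proof (rule Sup_eqI)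
  fix y assume "y \<in> {enat (card G) |G. simple_graph G \<and> ex_H G < k}"
  then obtain G where "y = enat (card G)" "simple_graph G" "ex_H G < k" by blast
  then show "y \<le> enat (Bk k)" using upper[OF k] by simp
next
  fix y assume h: "\<And>z. z \<in> {enat (card G) |G. simple_graph G \<and> ex_H G < k} \<Longrightarrow> z \<le> y"
  have "enat (card (G_k k)) \<in> {enat (card G) |G. simple_graph G \<and> ex_H G < k}"
    using Gk_simple Gk_exH[OF k] by blast
  then have "enat (card (G_k k)) \<le> y" by (rule h)
  then show "enat (Bk k) \<le> y" using Gk_card[OF k] unfolding Bk_def by simp
qed

lemma nbr_compl:
  assumes "x \<in> V"
  shows "nbr (Kset V - G) x = V - {x} - nbr G x"
proof (intro set_eqI iffI)
  fix y assume "y \<in> nbr (Kset V - G) x"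
  then have h: "{x,y} \<in> Kset V" "{x,y} \<notin> G" unfolding nbr_def by auto
  then have "y \<in> V" "card {x,y} = 2" unfolding Kset_def by auto
  then have "y \<noteq> x" by (cases "x = y") auto
  then show "y \<in> V - {x} - nbr G x" using h \<open>y \<in> V\<close> unfolding nbr_def by auto
next
  fix y assume "y \<in> V - {x} - nbr G x"
  then have "y \<in> V" "y \<noteq> x" "{x,y} \<notin> G" unfolding nbr_def by auto
  moreover have "card {x,y} = 2" using \<open>y \<noteq> x\<close> by simp
  ultimately show "y \<in> nbr (Kset V - G) x" unfolding nbr_def Kset_def using assms by simp
qed

lemma all_one:
  fixes f :: "nat \<Rightarrow> nat"
  assumes "finite A" "\<forall>x\<in>A. 1 \<le> f x" "(\<Sum>x\<in>A. f x) \<le> card A"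
  shows "\<forall>x\<in>A. f x = 1"
proof (rule ccontr)
  assume "\<not> (\<forall>x\<in>A. f x = 1)"
  then obtain a where "a \<in> A" "f a \<noteq> 1" by blast
  then have "\<exists>a\<in>A. (\<lambda>_. 1::nat) a < f a" using assms(2) by force
  then have "(\<Sum>x\<in>A. (1::nat)) < (\<Sum>x\<in>A. f x)"
    by (intro sum_strict_mono_ex1[OF assms(1)]) (use assms(2) in auto)
  then show False using assms(3) by simp
qed

lemma iso_odd:
  assumes sg: "simple_graph G" and k: "3 \<le> k" "odd k"
    and cV: "card (\<Union>G) = k + 1"
    and d1: "\<forall>x\<in>\<Union>G. card (nbr (Kset (\<Union>G) - G) x) = 1"
  shows "graph_iso G (G_k k)"
proof -
  define V where "V = \<Union>G"
  define C where "C = Kset V - G"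
  define n where "n = (k+1) div 2"
  have fV: "finite V" unfolding V_def using sg_finite_V[OF sg] .
  have cVn: "card V = 2 * n" unfolding n_def V_def using cV k(2) by (auto elim!: oddE)
  have CE: "\<forall>e\<in>C. e \<subseteq> V \<and> card e = 2" unfolding C_def Kset_def by auto
  obtain f where f: "bij_betw f V {0..<2*n}" "(\<lambda>e. f ` e) ` C = Mset n"
    using PM[OF fV cVn CE] d1 unfolding C_def V_def by blast
  have "{0..<2*n} = {0..k}" unfolding n_def using k(2) by (auto elim!: oddE)
  then have "bij_betw f (\<Union>G) {0..k}" using f(1) unfolding V_def by simp
  moreover have "(\<lambda>e. f ` e) ` (Kset (\<Union>G) - G) = removed_edges k"
    using f(2) removed_odd[OF k(2)] unfolding C_def V_def n_def by simp
  ultimately show ?thesis using iso_from[OF sg] by blast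
qed

lemma iso_even:
  assumes sg: "simple_graph G" and k: "3 \<le> k" "even k"
    and cV: "card (\<Union>G) = k + 1"
    and cc: "c \<in> \<Union>G" "card (nbr (Kset (\<Union>G) - G) c) = 2"
    and d1: "\<forall>x\<in>\<Union>G - {c}. card (nbr (Kset (\<Union>G) - G) x) = 1"
  shows "graph_iso G (G_k k)"
proof -
  define V where "V = \<Union>G"
  define C where "C = Kset V - G"
  define n where "n = (k-2) div 2"
  have fV: "finite V" unfolding V_def using sg_finite_V[OF sg] .
  have CE: "\<forall>e\<in>C. e \<subseteq> V \<and> card e = 2" unfolding C_def Kset_def by auto
  have cV': "c \<in> V" using cc unfolding V_def by simp
  obtain a b where ab: "nbr C c = {a,b}" "a \<noteq> b"
    using cc(2) unfolding C_def V_def by (meson card_2_iff)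
  have acC: "{c,a} \<in> C" "{c,b} \<in> C" using ab unfolding nbr_def by auto
  have aV: "a \<in> V" and bV: "b \<in> V" using acC CE by auto
  have ca: "c \<noteq> a" "c \<noteq> b"
  proof -
    have "c \<notin> nbr C c" unfolding nbr_def using CE by (auto simp: card_insert_if)
    then show "c \<noteq> a" "c \<noteq> b" using ab by auto
  qed
  have na: "nbr C a = {c}"
  proof -
    have "c \<in> nbr C a" using acC unfolding nbr_def by (simp add: insert_commute)
    moreover have "card (nbr C a) = 1" using d1 aV ca unfolding C_def V_def by auto
    ultimately show ?thesis by (metis card_1_singletonE singletonD)
  qed
  have nb: "nbr C b = {c}"
  proof -
    have "c \<in> nbr C b" using acC unfolding nbr_def by (simp add: insert_commute)
    moreover have "card (nbr C b) = 1" using d1 bV ca unfolding C_def V_def by auto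
    ultimately show ?thesis by (metis card_1_singletonE singletonD)
  qed
  define V' where "V' = V - {a,b,c}"
  define C' where "C' = C - {{a,c},{c,b}}"
  have fV': "finite V'" unfolding V'_def using fV by simp
  have cV'': "card V' = 2 * n"
  proof -
    have "card V' = card V - card {a,b,c}" unfolding V'_def
      by (rule card_Diff_subset) (use aV bV cV' fV in auto)
    also have "card {a,b,c} = 3" using ab(2) ca by simp
    finally show ?thesis unfolding n_def using cV k(2) unfolding V_def by (auto elim!: evenE)
  qed
  have CE': "\<forall>e\<in>C'. e \<subseteq> V' \<and> card e = 2"
  proof
    fix e assume eC': "e \<in> C'"
    then have eC: "e \<in> C" and ne: "e \<noteq> {a,c}" "e \<noteq> {c,b}" unfolding C'_def by auto
    have c2: "card e = 2" using CE eC by blast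
    have eV: "e \<subseteq> V" using CE eC by blast
    have "c \<notin> e"
    proof
      assume "c \<in> e"
      then obtain y where y: "e = {c,y}" using edge2_cases[OF c2 \<open>c \<in> e\<close>] by metis
      then have "y \<in> nbr C c" using eC unfolding nbr_def by simp
      then have "y = a \<or> y = b" using ab by auto
      then show False using ne y by (auto simp: insert_commute)
    qed
    moreover have "a \<notin> e"
    proof
      assume "a \<in> e"
      then obtain y where y: "e = {a,y}" using edge2_cases[OF c2 \<open>a \<in> e\<close>] by metis
      then have "y \<in> nbr C a" using eC unfolding nbr_def by simp
      then show False using na ne y by simp
    qed
    moreover have "b \<notin> e"
    proof
      assume "b \<in> e"
      then obtain y where y: "e = {b,y}" using edge2_cases[OF c2 \<open>b \<in> e\<close>] by metis
      then have "y \<in> nbr C b" using eC unfolding nbr_def by simp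
      then show False using nb ne y by (simp add: insert_commute)
    qed
    ultimately show "e \<subseteq> V' \<and> card e = 2" unfolding V'_def using eV c2 by auto
  qed
  have d1': "\<forall>x\<in>V'. card (nbr C' x) = 1"
  proof
    fix x assume x: "x \<in> V'"
    have "nbr C' x = nbr C x"
      unfolding nbr_def C'_def using x unfolding V'_def by (auto simp: doubleton_eq_iff)
    then show "card (nbr C' x) = 1" using d1 x unfolding V'_def C_def V_def by simp
  qed
  obtain f' where f': "bij_betw f' V' {0..<2*n}" "(\<lambda>e. f' ` e) ` C' = Mset n"
    using PM[OF fV' cV'' CE' d1'] by blast
  have n2: "2 * n = k - 2" unfolding n_def using k by (auto elim!: evenE)
  define f where "f x = (if x = a then k-2 else if x = c then k-1 else if x = b then k else f' x)" for x
  have feq: "\<And>x. x \<in> V' \<Longrightarrow> f x = f' x" unfolding f_def V'_def by auto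
  have b1: "bij_betw f V' {0..<k-2}" using f'(1) bij_betw_cong feq n2 by metis
  have b2: "bij_betw f {a,b,c} {k-2, k-1, k}"
    unfolding bij_betw_def f_def using ab(2) ca k by auto
  have "bij_betw f (V' \<union> {a,b,c}) ({0..<k-2} \<union> {k-2, k-1, k})"
    by (rule bij_betw_combine[OF b1 b2]) auto
  moreover have "V' \<union> {a,b,c} = V" unfolding V'_def using aV bV cV' by auto
  moreover have "{0..<k-2} \<union> {k-2, k-1, k} = {0..k}" using k by auto
  ultimately have bf: "bij_betw f V {0..k}" by simp
  have CC: "C = C' \<union> {{a,c},{c,b}}" unfolding C'_def using acC by (auto simp: insert_commute)
  have "(\<lambda>e. f ` e) ` C' = (\<lambda>e. f' ` e) ` C'"
  proof (rule image_cong[OF refl])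
    fix e assume "e \<in> C'"
    then have "e \<subseteq> V'" using CE' by blast
    then show "f ` e = f' ` e" using feq by (auto intro!: image_cong)
  qed
  moreover have "f ` {a,c} = {k-2, k-1}" unfolding f_def using ab(2) ca by auto
  moreover have "f ` {c,b} = {k-1, k}" unfolding f_def using ab(2) ca k by auto
  ultimately have "(\<lambda>e. f ` e) ` C = Mset n \<union> {{k-2, k-1}, {k-1, k}}"
    unfolding CC using f'(2) by simp
  then have "(\<lambda>e. f ` e) ` (Kset (\<Union>G) - G) = removed_edges k"
    using removed_even[OF k(2)] unfolding C_def V_def n_def by simp
  then show ?thesis using iso_from[OF sg] bf unfolding V_def by blast
qed

lemma choose2_double: "2 * (Suc k choose 2) = Suc k * k"
proof -
  have "Suc k choose 2 = Suc k * k div 2" using choose_two[of "Suc k"] by simp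
  moreover have "even (Suc k * k)" by simp
  ultimately show ?thesis by simp
qed

lemma unique:
  assumes k: "3 \<le> k" and sg: "simple_graph G" and ex: "ex_H G < k" and cG: "card G = Bk k"
  shows "graph_iso G (G_k k)"
proof -
  define m where "m = ex_H G"
  have B: "k * k - 2 \<le> 2 * Bk k" using Bval[OF k] by auto
  have kk: "3 * 3 \<le> k * k" using k by (intro mult_le_mono) auto
  have mk: "m = k - 1"
  proof (rule ccontr)
    assume "m \<noteq> k - 1"
    then have "m \<le> k - 2" using ex unfolding m_def by simp
    have "2 * card G \<le> m * (m + 2)" using vizing[OF sg] unfolding m_def .
    also have "\<dots> \<le> (k - 2) * k" using \<open>m \<le> k - 2\<close> k by (intro mult_le_mono) auto
    also have "(k - 2) * k = k * k - 2 * k" by (simp add: algebra_simps diff_mult_distrib)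
    finally have "2 * card G \<le> k * k - 2 * k" .
    then show False using B cG k kk by linarith
  qed
  have m2: "2 \<le> ex_H G" using mk k unfolding m_def by simp
  have "ex_H G * (ex_H G + 2) = k * k - 1" using mk kk_sub[of k] k unfolding m_def by simp
  then have tt: "ex_H G * (ex_H G + 2) \<le> 2 * card G + 1" using B cG kk by linarith
  have cV: "card (\<Union>G) = k + 1" using tight[OF sg m2 tt] mk k unfolding m_def by simp
  define V where "V = \<Union>G"
  define C where "C = Kset V - G"
  have fV: "finite V" unfolding V_def using sg_finite_V[OF sg] .
  have GK: "G \<subseteq> Kset V" using sg unfolding simple_graph_def Kset_def V_def by blast
  have sgC: "simple_graph C" unfolding simple_graph_def C_def Kset_def
    using Kset_finite[OF fV] unfolding Kset_def by auto
  have cC: "card C = (Suc k choose 2) - Bk k"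
  proof -
    have "card C = card (Kset V) - card G" unfolding C_def
      by (rule card_Diff_subset) (use GK Kset_finite[OF fV] finite_subset in blast)+
    then show ?thesis using Kset_card[OF fV] cV cG unfolding V_def by simp
  qed
  have cdeg: "card (nbr C x) + card (nbr G x) = k" if x: "x \<in> V" for x
  proof -
    have "nbr C x = V - {x} - nbr G x" unfolding C_def using nbr_compl[OF x] .
    moreover have "nbr G x \<subseteq> V - {x}" using nbr_sub_V nbr_noloop[OF sg] unfolding V_def by blast
    moreover have "card (V - {x}) = k" using cV x fV unfolding V_def by simp
    ultimately show ?thesis using fV by (metis card_Diff_subset card_mono finite_Diff le_add_diff_inverse2 finite_subset)
  qed
  have cdeg1: "1 \<le> card (nbr C x)" if "x \<in> V" for x
    using cdeg[OF that] deg_le[OF sg, of x] mk k unfolding m_def by linarith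
  have hs: "(\<Sum>x\<in>V. card (nbr C x)) = 2 * card C"
    by (rule handshake[OF sgC fV]) (unfold C_def Kset_def, blast)
  have ch: "2 * (Suc k choose 2) = Suc k * k" by (rule choose2_double)
  have Ble: "Bk k \<le> Suc k choose 2"
    unfolding Bk_def by simp
  show ?thesis
  proof (cases "even k")
    case False
    have "2 * card C = Suc k * k - 2 * Bk k" using cC ch Ble by simp
    also have "\<dots> = k + 1"
    proof -
      have "Suc k * k = k * k + k" by simp
      then show ?thesis using Bval[OF k] False kk by simp
    qed
    finally have "(\<Sum>x\<in>V. card (nbr C x)) \<le> card V" using hs cV unfolding V_def by simp
    have A1: "\<forall>x\<in>V. 1 \<le> card (nbr C x)" using cdeg1 by blast
    have "\<forall>x\<in>V. card (nbr C x) = 1" by (rule all_one[OF fV A1 \<open>(\<Sum>x\<in>V. card (nbr C x)) \<le> card V\<close>])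
    then have "\<forall>x\<in>\<Union>G. card (nbr (Kset (\<Union>G) - G) x) = 1" unfolding C_def V_def .
    then show ?thesis by (rule iso_odd[OF sg k False cV])
  next
    case True
    have "2 * card C = Suc k * k - 2 * Bk k" using cC ch Ble by simp
    also have "\<dots> = k + 2"
    proof -
      have "Suc k * k = k * k + k" by simp
      then show ?thesis using Bval[OF k] True kk by simp
    qed
    finally have S: "(\<Sum>x\<in>V. card (nbr C x)) = k + 2" using hs by simp
    have "\<exists>c\<in>V. card (nbr C c) \<noteq> 1"
    proof (rule ccontr)
      assume "\<not> (\<exists>c\<in>V. card (nbr C c) \<noteq> 1)"
      then have "(\<Sum>x\<in>V. card (nbr C x)) = (\<Sum>x\<in>V. 1)" by simp
      then show False using S cV unfolding V_def by simp
    qed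
    then obtain c where c: "c \<in> V" "card (nbr C c) \<noteq> 1" by blast
    have split: "(\<Sum>x\<in>V. card (nbr C x)) = card (nbr C c) + (\<Sum>x\<in>V - {c}. card (nbr C x))"
      using c(1) fV by (simp add: sum.remove)
    have "(\<Sum>x\<in>V - {c}. (1::nat)) \<le> (\<Sum>x\<in>V - {c}. card (nbr C x))"
      by (rule sum_mono) (use cdeg1 in auto)
    moreover have "card (V - {c}) = k" using cV c(1) fV unfolding V_def by simp
    ultimately have lo: "k \<le> (\<Sum>x\<in>V - {c}. card (nbr C x))" by simp
    have c2: "card (nbr C c) = 2" using split S lo c(2) cdeg1[OF c(1)] by linarith
    have "(\<Sum>x\<in>V - {c}. card (nbr C x)) \<le> card (V - {c})"
      using split S c2 \<open>card (V - {c}) = k\<close> by linarith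
    note le = this
    have A1: "\<forall>x\<in>V - {c}. 1 \<le> card (nbr C x)" using cdeg1 by blast
    have fVc: "finite (V - {c})" using fV by simp
    have "\<forall>x\<in>V - {c}. card (nbr C x) = 1" by (rule all_one[OF fVc A1 le])
    then have d1: "\<forall>x\<in>\<Union>G - {c}. card (nbr (Kset (\<Union>G) - G) x) = 1" unfolding C_def V_def .
    have cc: "c \<in> \<Union>G" "card (nbr (Kset (\<Union>G) - G) c) = 2" using c(1) c2 unfolding C_def V_def by auto
    show ?thesis by (rule iso_even[OF sg k True cV cc d1])
  qed
qed

theorem theorem3p16:
  fixes k :: nat
  assumes "k \<ge> 3"
  shows "E_H k = enat (if even k then (Suc k choose 2) - (k+2) div 2
                                  else (Suc k choose 2) - (k+1) div 2)
         \<and> simple_graph (G_k k) \<and> ex_H (G_k k) < k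
         \<and> enat (card (G_k k)) = E_H k
         \<and> (\<forall>G. simple_graph G \<and> ex_H G < k \<and> enat (card G) = E_H k
                \<longrightarrow> graph_iso G (G_k k))"
proof -
  have k: "3 \<le> k" using assms .
  have E: "E_H k = enat (Bk k)" using E_H_val[OF k] .
  have c: "card (G_k k) = Bk k" using Gk_card[OF k] unfolding Bk_def .
  have U: "\<forall>G. simple_graph G \<and> ex_H G < k \<and> enat (card G) = E_H k \<longrightarrow> graph_iso G (G_k k)"
  proof (intro allI impI)
    fix G assume h: "simple_graph G \<and> ex_H G < k \<and> enat (card G) = E_H k"
    then have "card G = Bk k" using E by simp
    then show "graph_iso G (G_k k)" using unique[OF k] h by blast
  qed
  show ?thesis using E c U Gk_simple Gk_exH[OF k] unfolding Bk_def by simp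
qed

end
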